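(* Assume $\gamma:=\sum_{k,m\ge1}p_kp_m\gamma_{k,m}<\infty$, where $\gamma_{k,m}\in(0,\infty]$ is the mean of $\tilde\mu_{k,m}$. Define the probability measure $\mathbf{P}$ on weighted rooted trees by $\mathbf{E}[f(\mathbf{T},\mathbf{o},\xi)]=\frac1\gamma\mathbb{E}\big[\mathfrak{m}(\mathbf{T},\mathbf{o},\xi)f(\mathbf{T},\mathbf{o},\xi)\big]$ with $\mathfrak{m}(\mathbf{T},\mathbf{o},\xi)=\pi_{\mathbf{o}}/(\hat\iota(\mathbf{o})+1)$, the scalar product $(f,g)=\mathbf{E}[f(\mathbf{T},\mathbf{o},\xi)g(\mathbf{T},\mathbf{o},\xi)]$, and the operator $Gf(\mathbf{T},\mathbf{o},\xi)=\frac{1}{\pi_{\mathbf{o}}}\sum_{z\sim\mathbf{o}}\xi(\mathbf{o},z)f(\mathbf{T},z,\xi)$. Then for any $f,g\in L_2(\mathbf{P})$ we have $(f,Gg)=(Gf,g)$.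
   Context: Let $(p_j)_{j\ge 0}$ be an offspring distribution with $p_0=0$ and $\mu:=\sum_{j\ge1} j p_j\in(1,\infty)$. For a vertex $x$ of a locally finite tree, its index is $\hat\iota(x)=\deg(x)-1$. For every unordered pair $\{k,m\}$ of positive integers let $\tilde\mu_{k,m}=\tilde\mu_{m,k}$ be a probability law on $(0,\infty)$ with mean $\gamma_{k,m}\in(0,\infty]$. The augmented weighted Galton--Watson tree (law $\mathbb{P}$, expectation $\mathbb{E}$) is constructed as follows: choose $k\ge1$ with probability $p_k$; the root $\mathbf{o}$ has $k+1$ neighbours $w_0,\dots,w_k$ joined by edges $\ell_0,\dots,\ell_k$; each $w_j$ is the root of an independent Galton--Watson tree with offspring law $(p_j)$ (so every non-root vertex has index equal to its number of children). Conditionally on the tree, the conductances $\xi(e)>0$ are independent, an edge joining vertices of indices $k$ and $m$ having law $\tilde\mu_{k,m}$. Write $\pi_x=\sum_{z\sim x}\xi(x,z)$. Functions $f,g$ are (measurable, isomorphism-invariant) functions on the space of rooted weighted trees $(\mathbf{T},\mathbf{o},\xi)$; $f(\mathbf{T},z,\xi)$ denotes $f$ evaluated at the same weighted tree re-rooted at $z$. *)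

theory Defs
  imports "HOL-Probability.Probability"
begin

text \<open>Rooted weighted graphs on the label set nat list: a symmetric weight function
  (edges = pairs with positive weight) together with a root.\<close>
type_synonym wtree = "(nat list \<Rightarrow> nat list \<Rightarrow> real) \<times> nat list"

definition nbrs :: "wtree \<Rightarrow> nat list set" where
  "nbrs t = {z. 0 < fst t (snd t) z}"

definition pi_root :: "wtree \<Rightarrow> real" where
  "pi_root t = (\<Sum>z\<in>nbrs t. fst t (snd t) z)"

definition reroot :: "wtree \<Rightarrow> nat list \<Rightarrow> wtree" where
  "reroot t z = (fst t, z)"

definition Gop :: "(wtree \<Rightarrow> real) \<Rightarrow> wtree \<Rightarrow> real" where
  "Gop f t = (\<Sum>z\<in>nbrs t. fst t (snd t) z * f (reroot t z)) / pi_root t"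

text \<open>m(T,o,xi) = pi_o / (index(o) + 1) = pi_o / deg(o).\<close>
definition mass :: "wtree \<Rightarrow> real" where
  "mass t = pi_root t / real (card (nbrs t))"

definition iso_invariant :: "(wtree \<Rightarrow> real) \<Rightarrow> bool" where
  "iso_invariant f \<longleftrightarrow>
     (\<forall>\<phi> w r. bij \<phi> \<longrightarrow> f (\<lambda>x y. w (\<phi> x) (\<phi> y), inv \<phi> r) = f (w, r))"

definition tree_space :: "wtree measure" where
  "tree_space = (PiM UNIV (\<lambda>_. PiM UNIV (\<lambda>_. borel))) \<Otimes>\<^sub>M count_space UNIV"

text \<open>Ulam-Harris labels: child j of v is j # v, parent of c is tl c.
  N v is the offspring variable at v; the root has N [] + 1 children.\<close>
definition nch :: "(nat list \<Rightarrow> nat) \<Rightarrow> nat list \<Rightarrow> nat" where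
  "nch N v = (if v = [] then N v + 1 else N v)"

fun inT :: "(nat list \<Rightarrow> nat) \<Rightarrow> nat list \<Rightarrow> bool" where
  "inT N [] = True"
| "inT N (j # v) = (inT N v \<and> j < nch N v)"

text \<open>Conductance of the edge between c and its parent: U at (c, index parent, index c).\<close>
definition edge_w :: "(nat list \<Rightarrow> nat) \<Rightarrow> (nat list \<times> nat \<times> nat \<Rightarrow> real) \<Rightarrow> nat list \<Rightarrow> real" where
  "edge_w N U c = U (c, N (tl c), N c)"

definition gw_weights ::
  "(nat list \<Rightarrow> nat) \<Rightarrow> (nat list \<times> nat \<times> nat \<Rightarrow> real) \<Rightarrow> nat list \<Rightarrow> nat list \<Rightarrow> real" where
  "gw_weights N U x y =
     (if y \<noteq> [] \<and> tl y = x \<and> inT N y then edge_w N U y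
      else if x \<noteq> [] \<and> tl x = y \<and> inT N x then edge_w N U x
      else 0)"

definition cond_law :: "(nat \<Rightarrow> nat \<Rightarrow> real measure) \<Rightarrow> nat \<Rightarrow> nat \<Rightarrow> real measure" where
  "cond_law \<mu> k m = (if 1 \<le> k \<and> 1 \<le> m then \<mu> k m else return borel 1)"

definition sample_space ::
  "nat pmf \<Rightarrow> (nat \<Rightarrow> nat \<Rightarrow> real measure) \<Rightarrow> ((nat list \<Rightarrow> nat) \<times> (nat list \<times> nat \<times> nat \<Rightarrow> real)) measure" where
  "sample_space p \<mu> =
     PiM UNIV (\<lambda>_::nat list. measure_pmf p) \<Otimes>\<^sub>M
     PiM UNIV (\<lambda>(c::nat list, k, m). cond_law \<mu> k m)"

definition augGW :: "nat pmf \<Rightarrow> (nat \<Rightarrow> nat \<Rightarrow> real measure) \<Rightarrow> wtree measure" where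
  "augGW p \<mu> = distr (sample_space p \<mu>) tree_space (\<lambda>\<omega>. (gw_weights (fst \<omega>) (snd \<omega>), []))"

definition gamma_km :: "(nat \<Rightarrow> nat \<Rightarrow> real measure) \<Rightarrow> nat \<Rightarrow> nat \<Rightarrow> ennreal" where
  "gamma_km \<mu> k m = (\<integral>\<^sup>+ x. ennreal x \<partial>\<mu> k m)"

definition gamma_const :: "nat pmf \<Rightarrow> (nat \<Rightarrow> nat \<Rightarrow> real measure) \<Rightarrow> ennreal" where
  "gamma_const p \<mu> =
     (\<integral>\<^sup>+ k. \<integral>\<^sup>+ m. ennreal (pmf p k * pmf p m) * gamma_km \<mu> k m
        \<partial>count_space {1..} \<partial>count_space {1..})"

definition Pstat :: "nat pmf \<Rightarrow> (nat \<Rightarrow> nat \<Rightarrow> real measure) \<Rightarrow> wtree measure" where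
  "Pstat p \<mu> = density (augGW p \<mu>) (\<lambda>t. ennreal (mass t / enn2real (gamma_const p \<mu>)))"

end

theory Submission
  imports Defs
begin



fun psi :: "nat list \<Rightarrow> nat list" where
  "psi [] = [0]" | "psi [0] = []" | "psi [Suc i] = [i,0]" | "psi [a,0] = [Suc a]"
| "psi (a#v) = a # psi v"

lemma psi_cons: "v \<noteq> [] \<Longrightarrow> v \<noteq> [0] \<Longrightarrow> psi (a#v) = a # psi v"
  apply (cases v) apply simp
  subgoal for b u by (cases b; cases u) auto
  done

lemma psi_cc: "psi (a#b#u) = (if b = 0 \<and> u = [] then [Suc a] else a # psi (b#u))"
  by (cases b; cases u) auto

lemma psi_eq_Nil: "psi y = [] \<longleftrightarrow> y = [0]"
  apply (cases y) apply simp
  subgoal for a v by (cases v; cases a) (auto simp: psi_cc)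
  done

lemma psi_eq_0: "psi y = [0] \<longleftrightarrow> y = []"
proof (induction y)
  case (Cons a v)
  then show ?case by (cases v; cases a) (auto simp: psi_cc psi_eq_Nil split: if_splits)
qed simp

lemma psi_psi[simp]: "psi (psi x) = x"
proof (induction x)
  case (Cons a v)
  show ?case
  proof (cases "v = [] \<or> v = [0]")
    case True then show ?thesis by (cases a) auto
  next
    case False
    then show ?thesis using Cons by (simp add: psi_cons psi_eq_Nil psi_eq_0)
  qed
qed simp

lemma psi_tl: "y \<noteq> [] \<Longrightarrow> y \<noteq> [0] \<Longrightarrow> psi y \<noteq> [] \<and> tl (psi y) = psi (tl y)"
proof (cases y)
  case (Cons a v)
  assume "y \<noteq> []" "y \<noteq> [0]"
  then show ?thesis using Cons
    apply (cases "v = [] \<or> v = [0]")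
    apply (cases a) apply auto[2]
    by (auto simp: psi_cons psi_eq_Nil)
qed simp

lemma inT_psi: "inT (N \<circ> psi) y = inT N (psi y)"
proof (induction y)
  case (Cons a v)
  show ?case
  proof (cases "v = [] \<or> v = [0]")
    case True then show ?thesis by (cases a) (auto simp: nch_def)
  next
    case False
    then show ?thesis using Cons by (auto simp add: psi_cons psi_eq_Nil nch_def)
  qed
qed (simp add: nch_def)

definition swp :: "nat \<Rightarrow> nat \<Rightarrow> nat" where
  "swp j a = (if a = j then 0 else if a = 0 then j else a)"

fun sig :: "nat \<Rightarrow> nat list \<Rightarrow> nat list" where
  "sig j [] = []" | "sig j [a] = [swp j a]" | "sig j (a#b#u) = a # sig j (b#u)"

lemma sig_Nil0[simp]: "sig j y = [] \<longleftrightarrow> y = []"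
  by (induction j y rule: sig.induct) auto

lemma sig_cons: "v \<noteq> [] \<Longrightarrow> sig j (a#v) = a # sig j v"
  by (cases v) auto

lemma sig_sig[simp]: "sig j (sig j x) = x"
  by (induction j x rule: sig.induct) (auto simp: swp_def sig_cons)


lemma sig_inj[simp]: "sig j a = sig j b \<longleftrightarrow> a = b"
proof
  assume "sig j a = sig j b"
  then have "sig j (sig j a) = sig j (sig j b)" by (rule arg_cong)
  then show "a = b" by (simp only: sig_sig)
qed simp

lemma sig_tl: "tl (sig j y) = sig j (tl y)"
  by (induction j y rule: sig.induct) auto

lemma inT_sig: "j < nch N [] \<Longrightarrow> inT (N \<circ> sig j) y = inT N (sig j y)"
proof (induction y)
  case (Cons a v)
  then show ?case
    by (cases "v = []") (auto simp: sig_cons nch_def swp_def)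
qed simp

lemma tl_len: "y \<noteq> [] \<Longrightarrow> length (tl y) < length y" by (cases y) auto

lemma gw_sym: "gw_weights N U x y = gw_weights N U y x"
proof -
  have "\<not> (y \<noteq> [] \<and> tl y = x \<and> x \<noteq> [] \<and> tl x = y)"
  proof
    assume h: "y \<noteq> [] \<and> tl y = x \<and> x \<noteq> [] \<and> tl x = y"
    then have "length x < length y" "length y < length x" using tl_len[of x] tl_len[of y] by auto
    then show False by simp
  qed
  then show ?thesis unfolding gw_weights_def by auto
qed

definition thpsi :: "nat list \<times> nat \<times> nat \<Rightarrow> nat list \<times> nat \<times> nat" where
  "thpsi = (\<lambda>(c,k,m). if c = [0] then ([0],m,k) else if c = [] then ([],k,m) else (psi c,k,m))"

lemma ch_psi: assumes n: "(x,y) \<noteq> ([],[0])" "(x,y) \<noteq> ([0],[])"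
  shows "(y \<noteq> [] \<and> tl y = x) \<longleftrightarrow> (psi y \<noteq> [] \<and> tl (psi y) = psi x)"
proof
  {
    assume h: "y \<noteq> [] \<and> tl y = x"
    then have "y \<noteq> [0]" using n by auto
    then show "psi y \<noteq> [] \<and> tl (psi y) = psi x" using psi_tl[of y] h by auto
  }
  {
    assume h: "psi y \<noteq> [] \<and> tl (psi y) = psi x"
    have y1: "y \<noteq> []" using h n psi_eq_Nil[of x] by auto
    have "psi y \<noteq> [0]" using y1 psi_eq_0[of y] by simp
    then have "psi (psi y) \<noteq> [] \<and> tl (psi (psi y)) = psi (tl (psi y))" using psi_tl[of "psi y"] h by blast
    then show "y \<noteq> [] \<and> tl y = x" using h by simp
  }
qed

lemma ew_psi: "y \<noteq> [] \<Longrightarrow> y \<noteq> [0] \<Longrightarrow> edge_w (N \<circ> psi) (U \<circ> thpsi) y = edge_w N U (psi y)"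
  unfolding edge_w_def thpsi_def using psi_tl[of y] by auto

lemma gw_psi: "gw_weights (N \<circ> psi) (U \<circ> thpsi) x y = gw_weights N U (psi x) (psi y)"
proof (cases "(x,y) = ([],[0]) \<or> (x,y) = ([0],[])")
  case True
  then show ?thesis
    by (auto simp: gw_weights_def edge_w_def thpsi_def nch_def)
next
  case False
  then have a: "(y \<noteq> [] \<and> tl y = x) \<longleftrightarrow> (psi y \<noteq> [] \<and> tl (psi y) = psi x)"
    and b: "(x \<noteq> [] \<and> tl x = y) \<longleftrightarrow> (psi x \<noteq> [] \<and> tl (psi x) = psi y)"
    using ch_psi[of x y] ch_psi[of y x] by auto
  have c: "y \<noteq> [] \<and> tl y = x \<Longrightarrow> edge_w (N \<circ> psi) (U \<circ> thpsi) y = edge_w N U (psi y)"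
    using False by (intro ew_psi) auto
  have d: "x \<noteq> [] \<and> tl x = y \<Longrightarrow> edge_w (N \<circ> psi) (U \<circ> thpsi) x = edge_w N U (psi x)"
    using False by (intro ew_psi) auto
  note i1 = inT_psi[of N y] and i2 = inT_psi[of N x]
  show ?thesis
  proof (cases "y \<noteq> [] \<and> tl y = x \<and> inT (N \<circ> psi) y")
    case True
    have A: "psi y \<noteq> [] \<and> tl (psi y) = psi x \<and> inT N (psi y)" using True a i1 by blast
    show ?thesis unfolding gw_weights_def
      by (subst if_P[OF True], subst if_P[OF A]) (rule c, use True in blast)
  next
    case F1: False
    have A: "\<not> (psi y \<noteq> [] \<and> tl (psi y) = psi x \<and> inT N (psi y))" using F1 a i1 by blast
    show ?thesis
    proof (cases "x \<noteq> [] \<and> tl x = y \<and> inT (N \<circ> psi) x")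
      case True
      have B: "psi x \<noteq> [] \<and> tl (psi x) = psi y \<and> inT N (psi x)" using True b i2 by blast
      show ?thesis unfolding gw_weights_def
        by (subst if_not_P[OF F1], subst if_not_P[OF A], subst if_P[OF True], subst if_P[OF B])
          (rule d, use True in blast)
    next
      case False
      have B: "\<not>(psi x \<noteq> [] \<and> tl (psi x) = psi y \<and> inT N (psi x))" using False b i2 by blast
      show ?thesis unfolding gw_weights_def
        by (subst if_not_P[OF F1], subst if_not_P[OF A], subst if_not_P[OF False], subst if_not_P[OF B]) (rule refl)
    qed
  qed
qed

definition thsig :: "nat \<Rightarrow> nat list \<times> nat \<times> nat \<Rightarrow> nat list \<times> nat \<times> nat" where
  "thsig j = (\<lambda>(c,k,m). (sig j c,k,m))"

lemma ew_sig: "edge_w (N \<circ> sig j) (U \<circ> thsig j) y = edge_w N U (sig j y)"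
  unfolding edge_w_def thsig_def by (simp add: sig_tl)

lemma gw_sig: assumes j: "j < nch N []"
  shows "gw_weights (N \<circ> sig j) (U \<circ> thsig j) x y = gw_weights N U (sig j x) (sig j y)"
proof -
  have e: "(y \<noteq> [] \<and> tl y = x) \<longleftrightarrow> (sig j y \<noteq> [] \<and> tl (sig j y) = sig j x)" for x y
    by (simp add: sig_tl)
  note a = e[of y x] and b = e[of x y]
  note i1 = inT_sig[OF j, of y] and i2 = inT_sig[OF j, of x]
  note c = ew_sig[of N j U y] and d = ew_sig[of N j U x]
  show ?thesis
  proof (cases "y \<noteq> [] \<and> tl y = x \<and> inT (N \<circ> sig j) y")
    case True
    have A: "sig j y \<noteq> [] \<and> tl (sig j y) = sig j x \<and> inT N (sig j y)" using True a i1 by blast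
    show ?thesis unfolding gw_weights_def
      by (subst if_P[OF True], subst if_P[OF A]) (rule c)
  next
    case F1: False
    have A: "\<not> (sig j y \<noteq> [] \<and> tl (sig j y) = sig j x \<and> inT N (sig j y))" using F1 a i1 by blast
    show ?thesis
    proof (cases "x \<noteq> [] \<and> tl x = y \<and> inT (N \<circ> sig j) x")
      case True
      have B: "sig j x \<noteq> [] \<and> tl (sig j x) = sig j y \<and> inT N (sig j x)" using True b i2 by blast
      show ?thesis unfolding gw_weights_def
        by (subst if_not_P[OF F1], subst if_not_P[OF A], subst if_P[OF True], subst if_P[OF B])
          (rule d)
    next
      case False
      have B: "\<not>(sig j x \<noteq> [] \<and> tl (sig j x) = sig j y \<and> inT N (sig j x))" using False b i2 by blast
      show ?thesis unfolding gw_weights_def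
        by (subst if_not_P[OF F1], subst if_not_P[OF A], subst if_not_P[OF False], subst if_not_P[OF B]) (rule refl)
    qed
  qed
qed




locale GWs =
  fixes p :: "nat pmf" and \<mu> :: "nat \<Rightarrow> nat \<Rightarrow> real measure"
  assumes mu_prob: "\<And>k m. 1 \<le> k \<Longrightarrow> 1 \<le> m \<Longrightarrow> prob_space (\<mu> k m)"
    and mu_borel: "\<And>k m. 1 \<le> k \<Longrightarrow> 1 \<le> m \<Longrightarrow> sets (\<mu> k m) = sets borel"
    and mu_pos: "\<And>k m. 1 \<le> k \<Longrightarrow> 1 \<le> m \<Longrightarrow> emeasure (\<mu> k m) {0<..} = 1"
    and mu_sym: "\<And>k m. 1 \<le> k \<Longrightarrow> 1 \<le> m \<Longrightarrow> \<mu> k m = \<mu> m k"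
begin

abbreviation "MN \<equiv> PiM UNIV (\<lambda>_::nat list. measure_pmf p)"
abbreviation "MUf \<equiv> (\<lambda>(c::nat list, k::nat, m::nat). cond_law \<mu> k m)"
abbreviation "MU \<equiv> PiM UNIV MUf"
abbreviation "S \<equiv> sample_space p \<mu>"

lemma cl_prob: "prob_space (cond_law \<mu> k m)"
  unfolding cond_law_def using mu_prob by (auto intro: prob_space_return)

lemma cl_sets: "sets (cond_law \<mu> k m) = sets borel"
  unfolding cond_law_def using mu_borel by auto

lemma cl_sym: "cond_law \<mu> k m = cond_law \<mu> m k"
  unfolding cond_law_def using mu_sym by auto

lemma cl_pos: "emeasure (cond_law \<mu> k m) {0<..} = 1"
  unfolding cond_law_def using mu_pos by (auto simp: emeasure_return)

lemma MU_prob: "prob_space MU"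
  by (intro prob_space_PiM) (auto simp: cl_prob)

lemma MN_prob: "prob_space MN"
  by (intro prob_space_PiM) (auto simp: prob_space_measure_pmf)

lemma S_prob: "prob_space S"
  unfolding sample_space_def
  using MU_prob MN_prob by (intro prob_space_pair) auto

lemma reindex_PiM:
  assumes M: "\<And>i. prob_space (M i)" and b: "bij b" and Mb: "\<And>i. M (b i) = M i"
  shows "distr (PiM UNIV M) (PiM UNIV M) (\<lambda>\<omega>. \<omega> \<circ> b) = PiM UNIV M"
proof -
  have e: "(\<lambda>i. M (b i)) = M" using Mb by auto
  have "distr (PiM UNIV M) (PiM UNIV M) (\<lambda>\<omega>. \<omega> \<circ> b) = distr (PiM UNIV M) (PiM UNIV M) (\<lambda>\<omega>. \<lambda>n\<in>UNIV. \<omega> (b n))"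
    by (rule distr_cong) (auto simp: restrict_def o_def)
  also have "\<dots> = distr (PiM UNIV M) (\<Pi>\<^sub>M i\<in>UNIV. M (b i)) (\<lambda>\<omega>. \<lambda>n\<in>UNIV. \<omega> (b n))"
    by (simp only: e)
  also have "\<dots> = (\<Pi>\<^sub>M i\<in>UNIV. M (b i))"
    using b M by (intro distr_PiM_reindex) (auto simp: bij_def)
  also have "\<dots> = PiM UNIV M" by (simp only: e)
  finally show ?thesis .
qed

lemma reindex_meas:
  assumes Mb: "\<And>i. M (b i) = M i"
  shows "(\<lambda>\<omega>. \<omega> \<circ> b) \<in> measurable (PiM UNIV M) (PiM UNIV M)"
proof -
  have "(\<lambda>\<omega> i. \<omega> (b i)) \<in> measurable (PiM UNIV M) (PiM UNIV M)"
  proof (rule measurable_PiM_single')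
    fix i show "(\<lambda>\<omega>. \<omega> (b i)) \<in> measurable (PiM UNIV M) (M i)"
      using measurable_component_singleton[of "b i" UNIV M] Mb[of i] by simp
  next
    show "(\<lambda>\<omega> i. \<omega> (b i)) \<in> space (PiM UNIV M) \<rightarrow> (\<Pi>\<^sub>E i\<in>UNIV. space (M i))"
      using Mb by (auto simp: space_PiM PiE_iff) (metis Mb)
  qed
  then show ?thesis by (simp add: o_def)
qed

lemma S_inv:
  assumes a: "bij a" and b: "bij b" and Mb: "\<And>i. MUf (b i) = MUf i"
  shows "distr S S (\<lambda>(N,U). (N \<circ> a, U \<circ> b)) = S"
proof -
  have 1: "distr MN MN (\<lambda>\<omega>. \<omega> \<circ> a) = MN"
    using a by (intro reindex_PiM) (auto simp: prob_space_measure_pmf)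
  have 2: "distr MU MU (\<lambda>\<omega>. \<omega> \<circ> b) = MU"
    using b Mb by (intro reindex_PiM) (auto simp: cl_prob split: prod.splits)
  have m1: "(\<lambda>\<omega>. \<omega> \<circ> a) \<in> measurable MN MN"
    by (rule reindex_meas) simp
  have m2: "(\<lambda>\<omega>. \<omega> \<circ> b) \<in> measurable MU MU"
    using Mb by (intro reindex_meas) auto
  have "distr MN MN (\<lambda>\<omega>. \<omega> \<circ> a) \<Otimes>\<^sub>M distr MU MU (\<lambda>\<omega>. \<omega> \<circ> b) = distr (MN \<Otimes>\<^sub>M MU) (MN \<Otimes>\<^sub>M MU) (\<lambda>(x, y). (x \<circ> a, y \<circ> b))"
  proof (rule pair_measure_distr[OF m1 m2])
    show "sigma_finite_measure (distr MU MU (\<lambda>\<omega>. \<omega> \<circ> b))"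
      unfolding 2 using MU_prob by (rule prob_space_imp_sigma_finite)
  qed
  then show ?thesis unfolding sample_space_def 1 2 by (rule sym)
qed

lemma mN[measurable]: "(\<lambda>\<omega>. fst \<omega> v) \<in> measurable S (count_space UNIV)"
proof -
  have "(\<lambda>N. N v) \<in> measurable MN (measure_pmf p)" by simp
  moreover have "(\<lambda>x. x) \<in> measurable (measure_pmf p) (count_space UNIV)" by simp
  ultimately have "(\<lambda>N. N v) \<in> measurable MN (count_space UNIV)" by (rule measurable_compose)
  then show ?thesis unfolding sample_space_def by simp
qed

lemma mU[measurable]: "(\<lambda>\<omega>. snd \<omega> i) \<in> borel_measurable S"
proof -
  have "(\<lambda>U. U i) \<in> measurable MU (MUf i)" by simp
  also have "measurable MU (MUf i) = borel_measurable MU"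
    by (rule measurable_cong_sets) (auto simp: cl_sets split: prod.splits)
  finally show ?thesis unfolding sample_space_def by simp
qed

lemma mU2[measurable]: "(\<lambda>\<omega>. snd \<omega> (c, fst \<omega> a, fst \<omega> b)) \<in> borel_measurable S"
proof -
  have g: "(\<lambda>\<omega>. (fst \<omega> a, fst \<omega> b)) \<in> measurable S (count_space UNIV)"
  proof -
    have "(\<lambda>\<omega>. (fst \<omega> a, fst \<omega> b)) \<in> measurable S (count_space UNIV \<Otimes>\<^sub>M count_space UNIV)"
      by measurable
    then show ?thesis by (simp add: pair_measure_countable)
  qed
  show ?thesis
    using measurable_compose_countable[where f="\<lambda>(k,m) \<omega>. snd \<omega> (c,k,m)", OF _ g] by simp
qed

lemma m_inT[measurable]: "Measurable.pred S (\<lambda>\<omega>. inT (fst \<omega>) y)"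
proof (induction y)
  case (Cons j v)
  have n: "(\<lambda>\<omega>. nch (fst \<omega>) v) \<in> measurable S (count_space UNIV)"
    unfolding nch_def by (cases "v = []") simp_all
  show ?case using Cons n by simp
qed simp

lemma m_gw[measurable]: "(\<lambda>\<omega>. gw_weights (fst \<omega>) (snd \<omega>) x y) \<in> borel_measurable S"
  unfolding gw_weights_def edge_w_def by measurable

lemma m_T0: "(\<lambda>\<omega>. (gw_weights (fst \<omega>) (snd \<omega>), [])) \<in> measurable S tree_space"
proof -
  have "(\<lambda>\<omega> x. gw_weights (fst \<omega>) (snd \<omega>) x) \<in> measurable S (PiM UNIV (\<lambda>_. PiM UNIV (\<lambda>_. borel)))"
  proof (rule measurable_PiM_single')
    fix x
    show "(\<lambda>\<omega>. gw_weights (fst \<omega>) (snd \<omega>) x) \<in> measurable S (PiM UNIV (\<lambda>_. borel))"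
      by (rule measurable_PiM_single') (auto simp: space_PiM)
  qed (auto simp: space_PiM)
  then show ?thesis unfolding tree_space_def by simp
qed

end

lemma t_w[measurable]: "(\<lambda>t. fst t r z) \<in> borel_measurable tree_space"
proof -
  have "fst \<in> measurable tree_space (PiM UNIV (\<lambda>_. PiM UNIV (\<lambda>_::nat list. borel)))"
    unfolding tree_space_def by (rule measurable_fst)
  then have "(\<lambda>t. fst t r) \<in> measurable tree_space (PiM UNIV (\<lambda>_::nat list. borel))"
    by (rule measurable_compose) simp
  then show ?thesis by (rule measurable_compose) simp
qed

lemma t_root[measurable]: "snd \<in> measurable tree_space (count_space UNIV)"
  unfolding tree_space_def by simp

lemma t_wr[measurable]: "(\<lambda>t. fst t (snd t) z) \<in> borel_measurable tree_space"
  using measurable_compose_countable[where f="\<lambda>r t. fst t r z", OF _ t_root] by simp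

lemma t_reroot[measurable]: "(\<lambda>t. reroot t z) \<in> measurable tree_space tree_space"
  unfolding reroot_def tree_space_def by simp

lemma t_nbrs_eq[measurable]: "Measurable.pred tree_space (\<lambda>t. nbrs t = A)"
proof -
  have "Measurable.pred tree_space (\<lambda>t. \<forall>z. (0 < fst t (snd t) z) = (z \<in> A))"
    by measurable
  moreover have "(nbrs t = A) = (\<forall>z. (0 < fst t (snd t) z) = (z \<in> A))" for t
    by (auto simp: nbrs_def)
  ultimately show ?thesis by simp
qed

lemma t_fin[measurable]: "Measurable.pred tree_space (\<lambda>t. finite (nbrs t))"
proof -
  have "{t\<in>space tree_space. finite (nbrs t)} = (\<Union>A\<in>Collect finite. {t\<in>space tree_space. nbrs t = A})"
    by auto
  also have "\<dots> \<in> sets tree_space"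
    by (intro sets.countable_UN' countable_Collect_finite) (auto simp: pred_def[symmetric])
  finally show ?thesis unfolding pred_def .
qed

lemma t_sum:
  assumes F: "\<And>z. (\<lambda>t. F t z) \<in> borel_measurable tree_space"
  shows "(\<lambda>t. \<Sum>z\<in>nbrs t. F t z :: real) \<in> borel_measurable tree_space"
proof -
  define g where "g t = (if finite (nbrs t) then nbrs t else {})" for t
  have c: "countable (Collect finite :: nat list set set)" by (rule countable_Collect_finite)
  have g: "g \<in> measurable tree_space (count_space (Collect finite))"
    unfolding measurable_count_space_eq_countable[OF c]
  proof (intro conjI ballI)
    fix A :: "nat list set" assume "A \<in> Collect finite"
    have "Measurable.pred tree_space (\<lambda>t. (finite (nbrs t) \<and> nbrs t = A) \<or> (\<not> finite (nbrs t) \<and> A = {}))"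
      by measurable
    moreover have "(g t = A) = ((finite (nbrs t) \<and> nbrs t = A) \<or> (\<not> finite (nbrs t) \<and> A = {}))" for t
      by (auto simp: g_def)
    ultimately have "{t\<in>space tree_space. g t = A} \<in> sets tree_space"
      unfolding pred_def by simp
    moreover have "g -` {A} \<inter> space tree_space = {t\<in>space tree_space. g t = A}" by auto
    ultimately show "g -` {A} \<inter> space tree_space \<in> sets tree_space" by simp
  qed (auto simp: g_def)
  have "(\<lambda>t. \<Sum>z\<in>g t. F t z) \<in> borel_measurable tree_space"
    by (rule measurable_compose_countable'[OF _ g c]) (use F in auto)
  moreover have "(\<Sum>z\<in>g t. F t z) = (\<Sum>z\<in>nbrs t. F t z)" for t
    by (auto simp: g_def)
  ultimately show ?thesis by simp
qed




definition Sg :: "(wtree \<Rightarrow> real) \<Rightarrow> wtree \<Rightarrow> real" where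
  "Sg g t = (\<Sum>z\<in>nbrs t. fst t (snd t) z * g (reroot t z))"

definition Phi :: "(wtree \<Rightarrow> real) \<Rightarrow> (wtree \<Rightarrow> real) \<Rightarrow> wtree \<Rightarrow> real" where
  "Phi h k t = h t * Sg k t / real (card (nbrs t))"

lemma reroot_comp: "k \<in> borel_measurable tree_space \<Longrightarrow> (\<lambda>t. k (reroot t z)) \<in> borel_measurable tree_space"
  by (rule measurable_compose[OF t_reroot])

lemma Sg_meas: assumes [measurable]: "k \<in> borel_measurable tree_space" shows "Sg k \<in> borel_measurable tree_space"
  unfolding Sg_def by (rule t_sum) (intro borel_measurable_times t_wr reroot_comp assms)

lemma card_meas[measurable]: "(\<lambda>t. real (card (nbrs t))) \<in> borel_measurable tree_space"
proof -
  have "(\<lambda>t. \<Sum>z\<in>nbrs t. (1::real)) \<in> borel_measurable tree_space" by (rule t_sum) simp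
  then show ?thesis by simp
qed

lemma Phi_meas: assumes [measurable]: "h \<in> borel_measurable tree_space" "k \<in> borel_measurable tree_space"
  shows "Phi h k \<in> borel_measurable tree_space"
  unfolding Phi_def by (intro borel_measurable_divide borel_measurable_times Sg_meas card_meas assms)

definition T0 :: "(nat list \<Rightarrow> nat) \<times> (nat list \<times> nat \<times> nat \<Rightarrow> real) \<Rightarrow> wtree" where
  "T0 \<omega> = (gw_weights (fst \<omega>) (snd \<omega>), [])"

definition Aj :: "(wtree \<Rightarrow> real) \<Rightarrow> (wtree \<Rightarrow> real) \<Rightarrow> nat \<Rightarrow> (nat list \<Rightarrow> nat) \<times> (nat list \<times> nat \<times> nat \<Rightarrow> real) \<Rightarrow> real" where
  "Aj h k j \<omega> = gw_weights (fst \<omega>) (snd \<omega>) [] [j] * h (T0 \<omega>) * k (reroot (T0 \<omega>) [j])"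

lemma nbrs_T0:
  assumes g: "\<forall>i. 0 < snd \<omega> i"
  shows "nbrs (T0 \<omega>) = (\<lambda>j. [j]) ` {..fst \<omega> []}"
proof -
  have "0 < gw_weights (fst \<omega>) (snd \<omega>) [] z \<longleftrightarrow> z \<in> (\<lambda>j. [j]) ` {..fst \<omega> []}" for z
  proof
    assume "0 < gw_weights (fst \<omega>) (snd \<omega>) [] z"
    then have "z \<noteq> [] \<and> tl z = [] \<and> inT (fst \<omega>) z" unfolding gw_weights_def by (auto split: if_splits)
    then show "z \<in> (\<lambda>j. [j]) ` {..fst \<omega> []}"
      by (cases z) (auto simp: nch_def)
  next
    assume "z \<in> (\<lambda>j. [j]) ` {..fst \<omega> []}"
    then show "0 < gw_weights (fst \<omega>) (snd \<omega>) [] z"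
      using g by (auto simp: gw_weights_def nch_def edge_w_def)
  qed
  then show ?thesis unfolding nbrs_def T0_def by auto
qed

context GWs begin

lemma AGW: "augGW p \<mu> = distr S tree_space T0"
  unfolding augGW_def T0_def by simp

lemma m_T0'[measurable]: "T0 \<in> measurable S tree_space"
  unfolding T0_def by (rule m_T0)

lemma good_AE: "AE \<omega> in S. \<forall>i. 0 < snd \<omega> i"
proof -
  have pps: "product_prob_space MUf"
    by (rule product_prob_spaceI) (simp add: cl_prob split: prod.split)
  have psf: "pair_sigma_finite MN MU"
    by (intro pair_sigma_finite.intro prob_space_imp_sigma_finite MN_prob MU_prob)
  have "AE U in MU. 0 < U i" for i
  proof -
    obtain c k m where i: "i = (c,k,m)" by (cases i) auto
    have P: "prob_space (cond_law \<mu> k m)" by (rule cl_prob)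
    have "AE x in cond_law \<mu> k m. x \<in> {0<..}"
      by (subst prob_space.AE_in_set_eq_1[OF P]) (auto simp: cl_sets cl_pos measure_def)
    then show "AE U in MU. 0 < U i" unfolding i by (intro product_prob_space.AE_component[OF pps]) auto
  qed
  then have "AE U in MU. \<forall>i. 0 < U i" by (simp add: AE_all_countable)
  then have ae: "AE N in MN. AE U in MU. \<forall>i. 0 < snd (N, U) i" by simp
  have "Measurable.pred S (\<lambda>x. \<forall>i. 0 < snd x i)" by measurable
  then have ms: "{x\<in>space (MN \<Otimes>\<^sub>M MU). \<forall>i. 0 < snd x i} \<in> sets (MN \<Otimes>\<^sub>M MU)"
    unfolding pred_def sample_space_def .
  have "AE x in MN \<Otimes>\<^sub>M MU. \<forall>i. 0 < snd x i"
    by (rule pair_sigma_finite.AE_pair_measure[OF psf ms ae])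
  then show ?thesis unfolding sample_space_def .
qed

lemma map_meas: assumes Mb: "\<And>i. MUf (b i) = MUf i"
  shows "(\<lambda>\<omega>. (fst \<omega> \<circ> a, snd \<omega> \<circ> b)) \<in> measurable S S"
proof -
  have 1: "(\<lambda>\<omega>. fst \<omega> \<circ> a) \<in> measurable (MN \<Otimes>\<^sub>M MU) MN"
    by (rule measurable_compose[OF measurable_fst reindex_meas]) simp
  have 2: "(\<lambda>\<omega>. snd \<omega> \<circ> b) \<in> measurable (MN \<Otimes>\<^sub>M MU) MU"
    by (rule measurable_compose[OF measurable_snd reindex_meas]) (rule Mb)
  show ?thesis unfolding sample_space_def by (rule measurable_Pair[OF 1 2])
qed

lemma nn_inv:
  assumes F: "F \<in> borel_measurable S" and a: "bij a" and b: "bij b" and Mb: "\<And>i. MUf (b i) = MUf i"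
  shows "(\<integral>\<^sup>+\<omega>. F \<omega> \<partial>S) = (\<integral>\<^sup>+\<omega>. F (fst \<omega> \<circ> a, snd \<omega> \<circ> b) \<partial>S)"
proof -
  have e: "(\<lambda>(N,U). (N \<circ> a, U \<circ> b)) = (\<lambda>\<omega>. (fst \<omega> \<circ> a, snd \<omega> \<circ> b))" by auto
  have "(\<integral>\<^sup>+\<omega>. F \<omega> \<partial>S) = (\<integral>\<^sup>+\<omega>. F \<omega> \<partial>distr S S (\<lambda>\<omega>. (fst \<omega> \<circ> a, snd \<omega> \<circ> b)))"
    using S_inv[OF a b Mb] unfolding e by simp
  also have "\<dots> = (\<integral>\<^sup>+\<omega>. F (fst \<omega> \<circ> a, snd \<omega> \<circ> b) \<partial>S)"
    by (rule nn_integral_distr[OF map_meas[OF Mb, of a]]) (simp add: F)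
  finally show ?thesis .
qed

lemma Mb_psi: "MUf (thpsi i) = MUf i"
  by (cases i) (auto simp: thpsi_def cl_sym)

lemma Mb_sig: "MUf (thsig j i) = MUf i"
  by (cases i) (auto simp: thsig_def)

end

lemma psi_comp: "psi \<circ> psi = id" by auto
lemma bij_psi: "bij psi" by (rule o_bij[OF psi_comp psi_comp])
lemma inv_psi: "inv psi = psi" by (rule inv_unique_comp[OF psi_comp psi_comp])
lemma sig_comp: "sig j \<circ> sig j = id" by auto
lemma bij_sig: "bij (sig j)" by (rule o_bij[OF sig_comp sig_comp])
lemma inv_sig: "inv (sig j) = sig j" by (rule inv_unique_comp[OF sig_comp sig_comp])
lemma thpsi_comp: "thpsi \<circ> thpsi = id"
  by (auto simp: thpsi_def psi_eq_Nil psi_eq_0 fun_eq_iff)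
lemma bij_thpsi: "bij thpsi" by (rule o_bij[OF thpsi_comp thpsi_comp])
lemma thsig_comp: "thsig j \<circ> thsig j = id"
  by (auto simp: thsig_def fun_eq_iff)
lemma bij_thsig: "bij (thsig j)" by (rule o_bij[OF thsig_comp thsig_comp])

lemma iso_apply: "iso_invariant f \<Longrightarrow> bij \<phi> \<Longrightarrow> f (\<lambda>x y. w (\<phi> x) (\<phi> y), inv \<phi> r) = f (w, r)"
  unfolding iso_invariant_def by blast

lemma gw_nonneg: "\<forall>i. 0 < snd \<omega> i \<Longrightarrow> 0 \<le> gw_weights (fst \<omega>) (snd \<omega>) x y"
  unfolding gw_weights_def edge_w_def by (auto intro: less_imp_le)

lemma Aj_sig:
  assumes h: "iso_invariant h" and k: "iso_invariant k" and j: "j \<le> fst \<omega> []"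
  shows "Aj h k j (fst \<omega> \<circ> sig j, snd \<omega> \<circ> thsig j) = Aj h k 0 \<omega>"
proof -
  obtain N U where \<omega>: "\<omega> = (N,U)" by (cases \<omega>)
  define w where "w = gw_weights N U"
  have jn: "j < nch N []" using j \<omega> by (simp add: nch_def)
  have g: "gw_weights (N \<circ> sig j) (U \<circ> thsig j) = (\<lambda>x y. w (sig j x) (sig j y))"
    unfolding w_def using gw_sig[OF jn] by (intro ext) simp
  have "h (\<lambda>x y. w (sig j x) (sig j y), []) = h (w, [])"
    using iso_apply[OF h bij_sig[of j], where w=w and r="[]"] by (simp add: inv_sig)
  moreover have "k (\<lambda>x y. w (sig j x) (sig j y), [j]) = k (w, [0])"
    using iso_apply[OF k bij_sig[of j], where w=w and r="[0]"] by (cases "j = 0") (simp_all add: inv_sig swp_def)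
  moreover have "w (sig j []) (sig j [j]) = w [] [0]" by (simp add: swp_def)
  ultimately show ?thesis
    unfolding Aj_def T0_def reroot_def \<omega> using g by (simp add: w_def)
qed

lemma Aj_psi:
  assumes h: "iso_invariant h" and k: "iso_invariant k"
  shows "Aj h k 0 (fst \<omega> \<circ> psi, snd \<omega> \<circ> thpsi) = Aj k h 0 \<omega>"
proof -
  obtain N U where \<omega>: "\<omega> = (N,U)" by (cases \<omega>)
  define w where "w = gw_weights N U"
  have g: "gw_weights (N \<circ> psi) (U \<circ> thpsi) = (\<lambda>x y. w (psi x) (psi y))"
    unfolding w_def using gw_psi by (intro ext) simp
  have "h (\<lambda>x y. w (psi x) (psi y), []) = h (w, [0])"
    using iso_apply[OF h bij_psi, where w=w and r="[0]"] by (simp add: inv_psi)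
  moreover have "k (\<lambda>x y. w (psi x) (psi y), [0]) = k (w, [])"
    using iso_apply[OF k bij_psi, where w=w and r="[]"] by (simp add: inv_psi)
  moreover have "w (psi []) (psi [0]) = w [] [0]" unfolding w_def by (simp add: gw_sym)
  ultimately show ?thesis
    unfolding Aj_def T0_def reroot_def \<omega> using g by (simp add: w_def)
qed

definition Q :: "(wtree \<Rightarrow> real) \<Rightarrow> (wtree \<Rightarrow> real) \<Rightarrow> nat \<Rightarrow> nat \<Rightarrow> (nat list \<Rightarrow> nat) \<times> (nat list \<times> nat \<times> nat \<Rightarrow> real) \<Rightarrow> ennreal" where
  "Q h k i j \<omega> = (if j \<le> fst \<omega> [] then ennreal (Aj h k i \<omega> / real (Suc (fst \<omega> []))) else 0)"

lemma row:
  assumes hp: "\<And>t. 0 \<le> h t" and kp: "\<And>t. 0 \<le> k t" and g: "\<forall>i. 0 < snd \<omega> i"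
  shows "ennreal (Phi h k (T0 \<omega>)) = (\<Sum>j. Q h k j j \<omega>)"
proof -
  define n where "n = fst \<omega> []"
  have nb: "nbrs (T0 \<omega>) = (\<lambda>j. [j]) ` {..n}" using nbrs_T0[OF g] n_def by simp
  have inj: "inj_on (\<lambda>j::nat. [j]) {..n}" by (auto simp: inj_on_def)
  have card: "card (nbrs (T0 \<omega>)) = Suc n" using nb card_image[OF inj] by simp
  have Sg: "Sg k (T0 \<omega>) = (\<Sum>j\<le>n. gw_weights (fst \<omega>) (snd \<omega>) [] [j] * k (reroot (T0 \<omega>) [j]))"
    unfolding Sg_def nb sum.reindex[OF inj] by (simp add: T0_def)
  have "Phi h k (T0 \<omega>) = (\<Sum>j\<le>n. Aj h k j \<omega> / real (Suc n))"
    unfolding Phi_def Sg card Aj_def sum_divide_distrib[symmetric] sum_distrib_left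
    by (simp add: ac_simps)
  also have "ennreal \<dots> = (\<Sum>j\<le>n. ennreal (Aj h k j \<omega> / real (Suc n)))"
    using gw_nonneg[OF g] hp kp by (intro sum_ennreal[symmetric]) (auto simp: Aj_def)
  also have "\<dots> = (\<Sum>j\<le>n. Q h k j j \<omega>)"
    by (auto simp: Q_def n_def intro!: sum.cong)
  also have "\<dots> = (\<Sum>j. Q h k j j \<omega>)"
    by (rule suminf_finite[symmetric]) (auto simp: Q_def n_def)
  finally show ?thesis .
qed

context GWs begin

lemma Aj_meas[measurable]:
  assumes [measurable]: "h \<in> borel_measurable tree_space" "k \<in> borel_measurable tree_space"
  shows "Aj h k j \<in> borel_measurable S"
proof -
  have 1: "(\<lambda>\<omega>. h (T0 \<omega>)) \<in> borel_measurable S" by (rule measurable_compose[OF m_T0' assms(1)])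
  have 2: "(\<lambda>\<omega>. k (reroot (T0 \<omega>) [j])) \<in> borel_measurable S"
    by (rule measurable_compose[OF m_T0' reroot_comp[OF assms(2)]])
  show ?thesis unfolding Aj_def by (intro borel_measurable_times m_gw 1 2)
qed

lemma Q_meas[measurable]:
  assumes [measurable]: "h \<in> borel_measurable tree_space" "k \<in> borel_measurable tree_space"
  shows "Q h k i j \<in> borel_measurable S"
proof -
  have [measurable]: "Aj h k i \<in> borel_measurable S" by (rule Aj_meas) (rule assms)+
  have [measurable]: "(\<lambda>\<omega>. real (Suc (fst \<omega> []))) \<in> borel_measurable S"
    by (rule measurable_compose[OF mN]) simp
  show ?thesis unfolding Q_def by measurable
qed


lemma sumQ0: "(\<Sum>j. Q h k 0 j \<omega>) = ennreal (Aj h k 0 \<omega>)"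
proof -
  define n where "n = fst \<omega> []"
  define A where "A = Aj h k 0 \<omega>"
  have "(\<Sum>j. Q h k 0 j \<omega>) = (\<Sum>j\<le>n. Q h k 0 j \<omega>)"
    by (rule suminf_finite) (auto simp: Q_def n_def)
  also have "\<dots> = (\<Sum>j\<le>n. ennreal (A / real (Suc n)))"
    by (auto simp: Q_def n_def A_def intro!: sum.cong)
  also have "\<dots> = of_nat (Suc n) * ennreal (A / real (Suc n))" by simp
  also have "\<dots> = ennreal A"
  proof (cases "0 \<le> A")
    case True
    then have "of_nat (Suc n) * ennreal (A / real (Suc n)) = ennreal (real (Suc n) * (A / real (Suc n)))"
      by (subst ennreal_mult) (auto simp: ennreal_of_nat_eq_real_of_nat)
    then show ?thesis by simp
  next
    case False
    then have "A / real (Suc n) \<le> 0" by (intro divide_nonpos_pos) auto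
    then show ?thesis using False by (simp add: ennreal_neg)
  qed
  finally show ?thesis by (simp add: A_def)
qed

lemma core_A0:
  assumes hm[measurable]: "h \<in> borel_measurable tree_space" and km[measurable]: "k \<in> borel_measurable tree_space"
    and hp: "\<And>t. 0 \<le> h t" and kp: "\<And>t. 0 \<le> k t"
    and hi: "iso_invariant h" and ki: "iso_invariant k"
  shows "(\<integral>\<^sup>+t. ennreal (Phi h k t) \<partial>augGW p \<mu>) = (\<integral>\<^sup>+\<omega>. ennreal (Aj h k 0 \<omega>) \<partial>S)"
proof -
  have pm: "Phi h k \<in> borel_measurable tree_space" by (rule Phi_meas[OF hm km])
  have "(\<integral>\<^sup>+t. ennreal (Phi h k t) \<partial>augGW p \<mu>) = (\<integral>\<^sup>+\<omega>. ennreal (Phi h k (T0 \<omega>)) \<partial>S)"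
    unfolding AGW by (rule nn_integral_distr[OF m_T0']) (use pm in simp)
  also have "\<dots> = (\<integral>\<^sup>+\<omega>. (\<Sum>j. Q h k j j \<omega>) \<partial>S)"
    by (rule nn_integral_cong_AE) (use good_AE row[OF hp kp] in auto)
  also have "\<dots> = (\<Sum>j. \<integral>\<^sup>+\<omega>. Q h k j j \<omega> \<partial>S)"
    by (rule nn_integral_suminf) (rule Q_meas[OF hm km])
  also have "\<dots> = (\<Sum>j. \<integral>\<^sup>+\<omega>. Q h k 0 j \<omega> \<partial>S)"
  proof (intro arg_cong[where f=suminf] ext)
    fix j
    have "(\<integral>\<^sup>+\<omega>. Q h k j j \<omega> \<partial>S) = (\<integral>\<^sup>+\<omega>. Q h k j j (fst \<omega> \<circ> sig j, snd \<omega> \<circ> thsig j) \<partial>S)"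
      by (rule nn_inv[OF Q_meas[OF hm km] bij_sig bij_thsig Mb_sig])
    also have "\<dots> = (\<integral>\<^sup>+\<omega>. Q h k 0 j \<omega> \<partial>S)"
      by (rule nn_integral_cong) (simp add: Q_def Aj_sig[OF hi ki])
    finally show "(\<integral>\<^sup>+\<omega>. Q h k j j \<omega> \<partial>S) = (\<integral>\<^sup>+\<omega>. Q h k 0 j \<omega> \<partial>S)" .
  qed
  also have "\<dots> = (\<integral>\<^sup>+\<omega>. (\<Sum>j. Q h k 0 j \<omega>) \<partial>S)"
    by (rule nn_integral_suminf[symmetric]) (rule Q_meas[OF hm km])
  also have "\<dots> = (\<integral>\<^sup>+\<omega>. ennreal (Aj h k 0 \<omega>) \<partial>S)"
    by (rule nn_integral_cong) (rule sumQ0)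
  finally show ?thesis .
qed

lemma core:
  assumes hm: "h \<in> borel_measurable tree_space" and km: "k \<in> borel_measurable tree_space"
    and hp: "\<And>t. 0 \<le> h t" and kp: "\<And>t. 0 \<le> k t"
    and hi: "iso_invariant h" and ki: "iso_invariant k"
  shows "(\<integral>\<^sup>+t. ennreal (Phi h k t) \<partial>augGW p \<mu>) = (\<integral>\<^sup>+t. ennreal (Phi k h t) \<partial>augGW p \<mu>)"
proof -
  have am: "(\<lambda>\<omega>. ennreal (Aj h k 0 \<omega>)) \<in> borel_measurable S"
    using Aj_meas[OF hm km] by measurable
  have "(\<integral>\<^sup>+\<omega>. ennreal (Aj h k 0 \<omega>) \<partial>S) = (\<integral>\<^sup>+\<omega>. ennreal (Aj h k 0 (fst \<omega> \<circ> psi, snd \<omega> \<circ> thpsi)) \<partial>S)"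
    by (rule nn_inv[OF am bij_psi bij_thpsi Mb_psi])
  also have "\<dots> = (\<integral>\<^sup>+\<omega>. ennreal (Aj k h 0 \<omega>) \<partial>S)"
    by (simp add: Aj_psi[OF hi ki])
  finally show ?thesis
    using core_A0[OF hm km hp kp hi ki] core_A0[OF km hm kp hp ki hi] by simp
qed

end



lemma pi_Sg: "pi_root t = Sg (\<lambda>_. 1) t"
  unfolding pi_root_def Sg_def by simp

lemma Gop_Sg: "Gop g t = Sg g t / pi_root t"
  unfolding Gop_def Sg_def ..

lemma pi_nonneg: "0 \<le> pi_root t"
  unfolding pi_root_def nbrs_def by (intro sum_nonneg) auto

lemma mass_nonneg: "0 \<le> mass t"
  unfolding mass_def using pi_nonneg by simp

lemma mass_Gop: "mass t * Gop g t = Sg g t / real (card (nbrs t))"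
proof (cases "pi_root t = 0")
  case True
  have "Sg g t = 0"
  proof (cases "finite (nbrs t) \<and> nbrs t \<noteq> {}")
    case True
    then have "0 < pi_root t" unfolding pi_root_def
      by (intro sum_pos) (auto simp: nbrs_def)
    then show ?thesis using \<open>pi_root t = 0\<close> by simp
  next
    case False
    then show ?thesis unfolding Sg_def by auto
  qed
  then show ?thesis using True by (simp add: Gop_Sg)
next
  case False
  then show ?thesis unfolding mass_def Gop_Sg by (simp add: field_simps)
qed

lemma Phi_mass: "Phi h (\<lambda>_. 1) t = h t * mass t"
  unfolding Phi_def mass_def pi_Sg by simp

lemma Phi_decomp:
  "Phi (\<lambda>t. a1 t - a2 t) (\<lambda>t. b1 t - b2 t) t = Phi a1 b1 t - Phi a1 b2 t - Phi a2 b1 t + Phi a2 b2 t"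
proof -
  have e: "Sg (\<lambda>t. b1 t - b2 t) t = Sg b1 t - Sg b2 t"
    unfolding Sg_def by (simp add: right_diff_distrib sum_subtractf)
  have a: "(x1 - x2) * (y1 - y2) / c = x1*y1/c - x1*y2/c - x2*y1/c + x2*y2/c" for x1 x2 y1 y2 c :: real
    by (cases "c = 0") (simp_all add: field_simps)
  show ?thesis unfolding Phi_def e by (rule a)
qed

lemma Phi_bound:
  assumes "0 \<le> a t" "\<And>s. 0 \<le> b s"
  shows "Phi a b t \<le> (Phi (\<lambda>s. (a s)\<^sup>2) (\<lambda>_. 1) t + Phi (\<lambda>_. 1) (\<lambda>s. (b s)\<^sup>2) t) / 2"
proof -
  have "a t * Sg b t \<le> ((a t)\<^sup>2 * Sg (\<lambda>_. 1) t + Sg (\<lambda>s. (b s)\<^sup>2) t) / 2"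
  proof -
    have "a t * Sg b t = (\<Sum>z\<in>nbrs t. fst t (snd t) z * (a t * b (reroot t z)))"
      unfolding Sg_def by (simp add: sum_distrib_left ac_simps)
    also have "\<dots> \<le> (\<Sum>z\<in>nbrs t. fst t (snd t) z * (((a t)\<^sup>2 + (b (reroot t z))\<^sup>2) / 2))"
    proof (rule sum_mono)
      fix z assume "z \<in> nbrs t"
      then have w: "0 \<le> fst t (snd t) z" by (simp add: nbrs_def)
      have "a t * b (reroot t z) \<le> ((a t)\<^sup>2 + (b (reroot t z))\<^sup>2) / 2"
        using sum_squares_bound[of "a t" "b (reroot t z)"] by simp
      then show "fst t (snd t) z * (a t * b (reroot t z)) \<le> fst t (snd t) z * (((a t)\<^sup>2 + (b (reroot t z))\<^sup>2) / 2)"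
        using w by (rule mult_left_mono)
    qed
    also have "\<dots> = ((a t)\<^sup>2 * Sg (\<lambda>_. 1) t + Sg (\<lambda>s. (b s)\<^sup>2) t) / 2"
      unfolding Sg_def by (simp add: sum_distrib_left sum.distrib algebra_simps sum_divide_distrib[symmetric])
    finally show ?thesis .
  qed
  then have "a t * Sg b t / real (card (nbrs t)) \<le> (((a t)\<^sup>2 * Sg (\<lambda>_. 1) t + Sg (\<lambda>s. (b s)\<^sup>2) t) / 2) / real (card (nbrs t))"
    by (rule divide_right_mono) simp
  then show ?thesis unfolding Phi_def
    by (simp add: add_divide_distrib diff_divide_distrib)
qed


lemma Phi_nonneg: "(\<And>s. 0 \<le> h s) \<Longrightarrow> (\<And>s. 0 \<le> k s) \<Longrightarrow> 0 \<le> Phi h k t"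
  unfolding Phi_def Sg_def nbrs_def
  by (intro divide_nonneg_nonneg mult_nonneg_nonneg sum_nonneg) auto

lemma iso_const: "iso_invariant (\<lambda>_. c)" unfolding iso_invariant_def by simp
lemma iso_sq: "iso_invariant f \<Longrightarrow> iso_invariant (\<lambda>t. (f t)\<^sup>2)" unfolding iso_invariant_def by simp
lemma iso_pos: "iso_invariant f \<Longrightarrow> iso_invariant (\<lambda>t. max (f t) 0)" unfolding iso_invariant_def by simp
lemma iso_neg: "iso_invariant f \<Longrightarrow> iso_invariant (\<lambda>t. max (- f t) 0)" unfolding iso_invariant_def by simp

context GWs begin

lemma AGW_sets[simp]: "sets (augGW p \<mu>) = sets tree_space"
  unfolding AGW by simp

lemma AGW_meas[simp]: "measurable (augGW p \<mu>) N = measurable tree_space N"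
  by (rule measurable_cong_sets) simp_all

lemma Phi_int:
  assumes am: "a \<in> borel_measurable tree_space" and bm: "b \<in> borel_measurable tree_space"
    and ap: "\<And>t. 0 \<le> a t" and bp: "\<And>t. 0 \<le> b t"
    and ai: "iso_invariant a" and bi: "iso_invariant b"
    and a2: "integrable (augGW p \<mu>) (\<lambda>t. (a t)\<^sup>2 * mass t)"
    and b2: "integrable (augGW p \<mu>) (\<lambda>t. (b t)\<^sup>2 * mass t)"
  shows "integrable (augGW p \<mu>) (Phi a b)"
proof -
  let ?M = "augGW p \<mu>"
  have am2: "(\<lambda>t. (a t)\<^sup>2) \<in> borel_measurable tree_space" using am by measurable
  have bm2: "(\<lambda>t. (b t)\<^sup>2) \<in> borel_measurable tree_space" using bm by measurable
  have i1: "integrable ?M (Phi (\<lambda>s. (a s)\<^sup>2) (\<lambda>_. 1))"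
  proof -
    have "Phi (\<lambda>s. (a s)\<^sup>2) (\<lambda>_. 1) = (\<lambda>t. (a t)\<^sup>2 * mass t)" by (rule ext) (rule Phi_mass)
    then show ?thesis using a2 by simp
  qed
  have "(\<integral>\<^sup>+t. ennreal (Phi (\<lambda>_. 1) (\<lambda>s. (b s)\<^sup>2) t) \<partial>?M) = (\<integral>\<^sup>+t. ennreal (Phi (\<lambda>s. (b s)\<^sup>2) (\<lambda>_. 1) t) \<partial>?M)"
    by (rule core[OF borel_measurable_const bm2 _ _ iso_const iso_sq[OF bi]]) auto
  also have "\<dots> = (\<integral>\<^sup>+t. ennreal (norm ((b t)\<^sup>2 * mass t)) \<partial>?M)"
    by (intro nn_integral_cong) (simp add: Phi_mass mass_nonneg)
  also have "\<dots> < \<infinity>" using b2 by (simp add: integrable_iff_bounded)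
  finally have i2: "integrable ?M (Phi (\<lambda>_. 1) (\<lambda>s. (b s)\<^sup>2))"
    by (intro integrableI_nonneg) (auto intro!: Phi_nonneg Phi_meas bm2)
  show ?thesis
  proof (rule Bochner_Integration.integrable_bound)
    show "integrable ?M (\<lambda>t. (Phi (\<lambda>s. (a s)\<^sup>2) (\<lambda>_. 1) t + Phi (\<lambda>_. 1) (\<lambda>s. (b s)\<^sup>2) t) / 2)"
      using i1 i2 by auto
    show "Phi a b \<in> borel_measurable ?M" using Phi_meas[OF am bm] by simp
    show "AE t in ?M. norm (Phi a b t) \<le> norm ((Phi (\<lambda>s. (a s)\<^sup>2) (\<lambda>_. 1) t + Phi (\<lambda>_. 1) (\<lambda>s. (b s)\<^sup>2) t) / 2)"
    proof (intro AE_I2)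
      fix t
      have 0: "0 \<le> Phi a b t" by (rule Phi_nonneg) (auto simp: ap bp)
      have "Phi a b t \<le> (Phi (\<lambda>s. (a s)\<^sup>2) (\<lambda>_. 1) t + Phi (\<lambda>_. 1) (\<lambda>s. (b s)\<^sup>2) t) / 2"
        by (rule Phi_bound) (auto simp: ap bp)
      then show "norm (Phi a b t) \<le> norm ((Phi (\<lambda>s. (a s)\<^sup>2) (\<lambda>_. 1) t + Phi (\<lambda>_. 1) (\<lambda>s. (b s)\<^sup>2) t) / 2)"
        using 0 by simp
    qed
  qed
qed

lemma Phi_swap:
  assumes am: "a \<in> borel_measurable tree_space" and bm: "b \<in> borel_measurable tree_space"
    and ap: "\<And>t. 0 \<le> a t" and bp: "\<And>t. 0 \<le> b t"
    and ai: "iso_invariant a" and bi: "iso_invariant b"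
  shows "(\<integral>t. Phi a b t \<partial>augGW p \<mu>) = (\<integral>t. Phi b a t \<partial>augGW p \<mu>)"
proof -
  have "(\<integral>t. Phi a b t \<partial>augGW p \<mu>) = enn2real (\<integral>\<^sup>+t. ennreal (Phi a b t) \<partial>augGW p \<mu>)"
    using Phi_meas[OF am bm] by (intro integral_eq_nn_integral) (auto intro!: Phi_nonneg ap bp)
  also have "\<dots> = enn2real (\<integral>\<^sup>+t. ennreal (Phi b a t) \<partial>augGW p \<mu>)"
    by (simp add: core[OF am bm ap bp ai bi])
  also have "\<dots> = (\<integral>t. Phi b a t \<partial>augGW p \<mu>)"
    using Phi_meas[OF bm am] by (intro integral_eq_nn_integral[symmetric]) (auto intro!: Phi_nonneg ap bp)
  finally show ?thesis .
qed

end


lemma mass_meas: "mass \<in> borel_measurable tree_space"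
proof -
  have "(\<lambda>t. pi_root t) \<in> borel_measurable tree_space"
    unfolding pi_Sg by (rule Sg_meas) simp
  then show ?thesis unfolding mass_def[abs_def] by (intro borel_measurable_divide card_meas)
qed

lemma Gop_meas: "g \<in> borel_measurable tree_space \<Longrightarrow> Gop g \<in> borel_measurable tree_space"
proof -
  assume g: "g \<in> borel_measurable tree_space"
  have "(\<lambda>t. pi_root t) \<in> borel_measurable tree_space"
    unfolding pi_Sg by (rule Sg_meas) simp
  then show ?thesis unfolding Gop_Sg[abs_def] by (intro borel_measurable_divide Sg_meas g)
qed

lemma dens_eq: "mass t / c * (f t * Gop g t) = Phi f g t / c"
  unfolding Phi_def using mass_Gop[of t g] by (simp add: field_simps)

lemma dens_eq2: "mass t / c * (Gop f t * g t) = Phi g f t / c"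
  unfolding Phi_def using mass_Gop[of t f] by (simp add: field_simps)

context GWs begin

lemma sq_mass_int:
  assumes fm: "f \<in> borel_measurable tree_space" and c: "0 < enn2real (gamma_const p \<mu>)"
    and L2: "integrable (Pstat p \<mu>) (\<lambda>t. (f t)\<^sup>2)"
  shows "integrable (augGW p \<mu>) (\<lambda>t. (f t)\<^sup>2 * mass t)"
proof -
  let ?c = "enn2real (gamma_const p \<mu>)"
  have dm: "(\<lambda>t. mass t / ?c) \<in> borel_measurable (augGW p \<mu>)" using mass_meas by simp
  have "integrable (augGW p \<mu>) (\<lambda>t. (mass t / ?c) *\<^sub>R (f t)\<^sup>2)"
    using L2 unfolding Pstat_def
    by (subst (asm) integrable_density) (use fm dm mass_nonneg in auto)
  then have "integrable (augGW p \<mu>) (\<lambda>t. ?c * ((mass t / ?c) *\<^sub>R (f t)\<^sup>2))"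
    by (rule integrable_mult_right)
  moreover have "?c * ((mass t / ?c) *\<^sub>R (f t)\<^sup>2) = (f t)\<^sup>2 * mass t" for t
    using c by simp
  ultimately show ?thesis by simp
qed

lemma part_int:
  assumes fm: "f \<in> borel_measurable tree_space"
    and i: "integrable (augGW p \<mu>) (\<lambda>t. (f t)\<^sup>2 * mass t)"
  shows "integrable (augGW p \<mu>) (\<lambda>t. (max (f t) 0)\<^sup>2 * mass t)"
    and "integrable (augGW p \<mu>) (\<lambda>t. (max (- f t) 0)\<^sup>2 * mass t)"
proof -
  have mm: "mass \<in> borel_measurable tree_space" by (rule mass_meas)
  show "integrable (augGW p \<mu>) (\<lambda>t. (max (f t) 0)\<^sup>2 * mass t)"
  proof (rule Bochner_Integration.integrable_bound[OF i])
    show "(\<lambda>t. (max (f t) 0)\<^sup>2 * mass t) \<in> borel_measurable (augGW p \<mu>)" using fm mm by simp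
    show "AE t in augGW p \<mu>. norm ((max (f t) 0)\<^sup>2 * mass t) \<le> norm ((f t)\<^sup>2 * mass t)"
      using mass_nonneg by (intro AE_I2) (auto simp: max_def abs_mult intro!: mult_right_mono)
  qed
  show "integrable (augGW p \<mu>) (\<lambda>t. (max (- f t) 0)\<^sup>2 * mass t)"
  proof (rule Bochner_Integration.integrable_bound[OF i])
    show "(\<lambda>t. (max (- f t) 0)\<^sup>2 * mass t) \<in> borel_measurable (augGW p \<mu>)" using fm mm by simp
    show "AE t in augGW p \<mu>. norm ((max (- f t) 0)\<^sup>2 * mass t) \<le> norm ((f t)\<^sup>2 * mass t)"
      using mass_nonneg by (intro AE_I2) (auto simp: max_def abs_mult intro!: mult_right_mono)
  qed
qed

end


theorem lemma3p1:
  fixes p :: "nat pmf" and \<mu> :: "nat \<Rightarrow> nat \<Rightarrow> real measure" and f g :: "wtree \<Rightarrow> real"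
  assumes p0: "pmf p 0 = 0"
    and mean_fin: "integrable (measure_pmf p) real"
    and mean_gt1: "measure_pmf.expectation p real > 1"
    and mu_prob: "\<And>k m. 1 \<le> k \<Longrightarrow> 1 \<le> m \<Longrightarrow> prob_space (\<mu> k m)"
    and mu_borel: "\<And>k m. 1 \<le> k \<Longrightarrow> 1 \<le> m \<Longrightarrow> sets (\<mu> k m) = sets borel"
    and mu_pos: "\<And>k m. 1 \<le> k \<Longrightarrow> 1 \<le> m \<Longrightarrow> emeasure (\<mu> k m) {0<..} = 1"
    and mu_sym: "\<And>k m. 1 \<le> k \<Longrightarrow> 1 \<le> m \<Longrightarrow> \<mu> k m = \<mu> m k"
    and gamma_fin: "gamma_const p \<mu> < \<infinity>"
    and f_meas: "f \<in> borel_measurable tree_space" and g_meas: "g \<in> borel_measurable tree_space"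
    and f_L2: "integrable (Pstat p \<mu>) (\<lambda>t. (f t)\<^sup>2)"
    and g_L2: "integrable (Pstat p \<mu>) (\<lambda>t. (g t)\<^sup>2)"
    and f_inv: "iso_invariant f" and g_inv: "iso_invariant g"
  shows "integrable (Pstat p \<mu>) (\<lambda>t. f t * Gop g t)
       \<and> integrable (Pstat p \<mu>) (\<lambda>t. Gop f t * g t)
       \<and> (\<integral>t. f t * Gop g t \<partial>Pstat p \<mu>) = (\<integral>t. Gop f t * g t \<partial>Pstat p \<mu>)"
proof -
  interpret G: GWs p \<mu>
    by (rule GWs.intro) (fact mu_prob mu_borel mu_pos mu_sym)+
  let ?M = "augGW p \<mu>"
  let ?c = "enn2real (gamma_const p \<mu>)"
  define d where "d t = mass t / ?c" for t
  have P: "Pstat p \<mu> = density ?M (\<lambda>t. ennreal (d t))" unfolding Pstat_def d_def ..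
  have dm: "d \<in> borel_measurable ?M" unfolding d_def[abs_def] using mass_meas by simp
  have dn: "AE t in ?M. 0 \<le> d t" unfolding d_def using mass_nonneg by simp
  have F1m: "(\<lambda>t. f t * Gop g t) \<in> borel_measurable ?M" using f_meas Gop_meas[OF g_meas] by simp
  have F2m: "(\<lambda>t. Gop f t * g t) \<in> borel_measurable ?M" using g_meas Gop_meas[OF f_meas] by simp
  have e1: "(\<lambda>t. d t *\<^sub>R (f t * Gop g t)) = (\<lambda>t. Phi f g t / ?c)"
    unfolding d_def by (intro ext) (simp only: real_scaleR_def dens_eq)
  have e2: "(\<lambda>t. d t *\<^sub>R (Gop f t * g t)) = (\<lambda>t. Phi g f t / ?c)"
    unfolding d_def by (intro ext) (simp only: real_scaleR_def dens_eq2)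
  have I1: "integrable (Pstat p \<mu>) (\<lambda>t. f t * Gop g t) \<longleftrightarrow> integrable ?M (\<lambda>t. Phi f g t / ?c)"
    unfolding P e1[symmetric] by (rule integrable_density[OF F1m dm dn])
  have I2: "integrable (Pstat p \<mu>) (\<lambda>t. Gop f t * g t) \<longleftrightarrow> integrable ?M (\<lambda>t. Phi g f t / ?c)"
    unfolding P e2[symmetric] by (rule integrable_density[OF F2m dm dn])
  have J1: "(\<integral>t. f t * Gop g t \<partial>Pstat p \<mu>) = (\<integral>t. Phi f g t \<partial>?M) / ?c"
    unfolding P by (subst integral_density[OF F1m dm dn]) (simp only: e1 integral_divide_zero)
  have J2: "(\<integral>t. Gop f t * g t \<partial>Pstat p \<mu>) = (\<integral>t. Phi g f t \<partial>?M) / ?c"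
    unfolding P by (subst integral_density[OF F2m dm dn]) (simp only: e2 integral_divide_zero)
  show ?thesis
  proof (cases "?c = 0")
    case True
    then show ?thesis unfolding I1 I2 J1 J2 by simp
  next
    case False
    then have cpos: "0 < ?c" using enn2real_nonneg[of "gamma_const p \<mu>"] by linarith
    define fp where "fp t = max (f t) 0" for t
    define fn where "fn t = max (- f t) 0" for t
    define gp where "gp t = max (g t) 0" for t
    define gn where "gn t = max (- g t) 0" for t
    have fd: "f = (\<lambda>t. fp t - fn t)" by (auto simp: fp_def fn_def fun_eq_iff max_def)
    have gd: "g = (\<lambda>t. gp t - gn t)" by (auto simp: gp_def gn_def fun_eq_iff max_def)
    have fpm: "fp \<in> borel_measurable tree_space" unfolding fp_def[abs_def] using f_meas by simp
    have fnm: "fn \<in> borel_measurable tree_space" unfolding fn_def[abs_def] using f_meas by simp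
    have gpm: "gp \<in> borel_measurable tree_space" unfolding gp_def[abs_def] using g_meas by simp
    have gnm: "gn \<in> borel_measurable tree_space" unfolding gn_def[abs_def] using g_meas by simp
    have fpp: "\<And>t. 0 \<le> fp t" and fnp: "\<And>t. 0 \<le> fn t" and gpp: "\<And>t. 0 \<le> gp t" and gnp: "\<And>t. 0 \<le> gn t"
      by (auto simp: fp_def fn_def gp_def gn_def)
    have fpi: "iso_invariant fp" unfolding fp_def[abs_def] by (rule iso_pos[OF f_inv])
    have fni: "iso_invariant fn" unfolding fn_def[abs_def] by (rule iso_neg[OF f_inv])
    have gpi: "iso_invariant gp" unfolding gp_def[abs_def] by (rule iso_pos[OF g_inv])
    have gni: "iso_invariant gn" unfolding gn_def[abs_def] by (rule iso_neg[OF g_inv])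
    have f2: "integrable ?M (\<lambda>t. (f t)\<^sup>2 * mass t)" by (rule G.sq_mass_int[OF f_meas cpos f_L2])
    have g2: "integrable ?M (\<lambda>t. (g t)\<^sup>2 * mass t)" by (rule G.sq_mass_int[OF g_meas cpos g_L2])
    have fp2: "integrable ?M (\<lambda>t. (fp t)\<^sup>2 * mass t)" unfolding fp_def by (rule G.part_int(1)[OF f_meas f2])
    have fn2: "integrable ?M (\<lambda>t. (fn t)\<^sup>2 * mass t)" unfolding fn_def by (rule G.part_int(2)[OF f_meas f2])
    have gp2: "integrable ?M (\<lambda>t. (gp t)\<^sup>2 * mass t)" unfolding gp_def by (rule G.part_int(1)[OF g_meas g2])
    have gn2: "integrable ?M (\<lambda>t. (gn t)\<^sup>2 * mass t)" unfolding gn_def by (rule G.part_int(2)[OF g_meas g2])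
    note PI = G.Phi_int and PS = G.Phi_swap
    have i1: "integrable ?M (Phi fp gp)" by (rule PI[OF fpm gpm fpp gpp fpi gpi fp2 gp2])
    have i2: "integrable ?M (Phi fp gn)" by (rule PI[OF fpm gnm fpp gnp fpi gni fp2 gn2])
    have i3: "integrable ?M (Phi fn gp)" by (rule PI[OF fnm gpm fnp gpp fni gpi fn2 gp2])
    have i4: "integrable ?M (Phi fn gn)" by (rule PI[OF fnm gnm fnp gnp fni gni fn2 gn2])
    have j1: "integrable ?M (Phi gp fp)" by (rule PI[OF gpm fpm gpp fpp gpi fpi gp2 fp2])
    have j2: "integrable ?M (Phi gn fp)" by (rule PI[OF gnm fpm gnp fpp gni fpi gn2 fp2])
    have j3: "integrable ?M (Phi gp fn)" by (rule PI[OF gpm fnm gpp fnp gpi fni gp2 fn2])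
    have j4: "integrable ?M (Phi gn fn)" by (rule PI[OF gnm fnm gnp fnp gni fni gn2 fn2])
    have D1: "Phi f g = (\<lambda>t. Phi fp gp t - Phi fp gn t - Phi fn gp t + Phi fn gn t)"
      unfolding fd gd by (rule ext) (rule Phi_decomp)
    have D2: "Phi g f = (\<lambda>t. Phi gp fp t - Phi gp fn t - Phi gn fp t + Phi gn fn t)"
      unfolding fd gd by (rule ext) (rule Phi_decomp)
    have IF: "integrable ?M (Phi f g)" unfolding D1 using i1 i2 i3 i4 by auto
    have IG: "integrable ?M (Phi g f)" unfolding D2 using j1 j2 j3 j4 by auto
    have "(\<integral>t. Phi f g t \<partial>?M) = (\<integral>t. Phi fp gp t \<partial>?M) - (\<integral>t. Phi fp gn t \<partial>?M) - (\<integral>t. Phi fn gp t \<partial>?M) + (\<integral>t. Phi fn gn t \<partial>?M)"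
      unfolding D1 using i1 i2 i3 i4 by simp
    also have "\<dots> = (\<integral>t. Phi gp fp t \<partial>?M) - (\<integral>t. Phi gn fp t \<partial>?M) - (\<integral>t. Phi gp fn t \<partial>?M) + (\<integral>t. Phi gn fn t \<partial>?M)"
      using PS[OF fpm gpm fpp gpp fpi gpi] PS[OF fpm gnm fpp gnp fpi gni]
        PS[OF fnm gpm fnp gpp fni gpi] PS[OF fnm gnm fnp gnp fni gni] by simp
    also have "\<dots> = (\<integral>t. Phi g f t \<partial>?M)"
      unfolding D2 using j1 j2 j3 j4 by simp
    finally have EQ: "(\<integral>t. Phi f g t \<partial>?M) = (\<integral>t. Phi g f t \<partial>?M)" .
    show ?thesis unfolding I1 I2 J1 J2 EQ using IF IG by auto
  qed
qed



end
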